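(* Let $G$ be a non-archimedean Hausdorff topological group, $M$ a Hausdorff topological group, and $f:M\to G$ a continuous homomorphism which is an epimorphism in the category of Hausdorff topological groups. Then $f(M)$ is dense in $G$.
   Context: A topological group is non-archimedean if it has a local base at the identity consisting of open subgroups. $f$ is an epimorphism in the category of Hausdorff topological groups if for every Hausdorff topological group $F$ and all continuous homomorphisms $g,h:G\to F$, $g\circ f=h\circ f$ implies $g=h$. *)

theory Defs
  imports "HOL-Analysis.Analysis" "HOL-Algebra.Group"
begin

definition topological_group :: "('a, 'b) monoid_scheme \<Rightarrow> 'a topology \<Rightarrow> bool" where
  "topological_group G T \<longleftrightarrow>
     group G \<and> topspace T = carrier G \<and>
     continuous_map (prod_topology T T) T (\<lambda>p. fst p \<otimes>\<^bsub>G\<^esub> snd p) \<and>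
     continuous_map T T (\<lambda>x. inv\<^bsub>G\<^esub> x)"

definition non_archimedean :: "('a, 'b) monoid_scheme \<Rightarrow> 'a topology \<Rightarrow> bool" where
  "non_archimedean G T \<longleftrightarrow>
     (\<forall>W. openin T W \<and> \<one>\<^bsub>G\<^esub> \<in> W \<longrightarrow>
        (\<exists>U. subgroup U G \<and> openin T U \<and> U \<subseteq> W))"

text \<open>Carrier type of the test groups F in the epimorphism condition (HOL cannot quantify
  over types inside a formula).\<close>
type_synonym 'a test_carrier = "('a set \<times> bool) \<Rightarrow> ('a set \<times> bool)"

definition epi_hausdorff_tg ::
  "('m, 'c) monoid_scheme \<Rightarrow> 'm topology \<Rightarrow> ('a, 'd) monoid_scheme \<Rightarrow> 'a topology
     \<Rightarrow> ('m \<Rightarrow> 'a) \<Rightarrow> bool" where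
  "epi_hausdorff_tg M TM G TG f \<longleftrightarrow>
     (\<forall>(F :: 'a test_carrier monoid) (TF :: 'a test_carrier topology) g h.
        topological_group F TF \<and> Hausdorff_space TF \<and>
        g \<in> hom G F \<and> continuous_map TG TF g \<and>
        h \<in> hom G F \<and> continuous_map TG TF h \<and>
        (\<forall>x \<in> carrier M. g (f x) = h (f x))
        \<longrightarrow> (\<forall>x \<in> carrier G. g x = h x))"

end

theory Submission
  imports Defs "HOL-Algebra.Coset"
begin

definition SymF :: "('b \<Rightarrow> 'b) monoid" where
  "SymF = \<lparr>carrier = {p. bij p}, mult = (\<circ>), one = id\<rparr>"

definition SymT :: "('b \<Rightarrow> 'b) topology" where
  "SymT = subtopology (product_topology (\<lambda>_. discrete_topology UNIV) UNIV) {p. bij p}"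

lemma topspace_SymT: "topspace SymT = {p. bij p}"
  by (simp add: SymT_def PiE_def extensional_def Pi_def)

lemma cont_disc:
  "continuous_map X (discrete_topology UNIV) f \<longleftrightarrow> (\<forall>z. openin X {x\<in>topspace X. f x = z})"
proof
  assume "continuous_map X (discrete_topology UNIV) f"
  then show "\<forall>z. openin X {x\<in>topspace X. f x = z}"
    using openin_continuous_map_preimage[of X _ f "{_}"] by auto
next
  assume H: "\<forall>z. openin X {x\<in>topspace X. f x = z}"
  show "continuous_map X (discrete_topology UNIV) f"
    unfolding continuous_map_def
  proof (intro conjI allI impI)
    fix U
    have "{x \<in> topspace X. f x \<in> U} = (\<Union>z\<in>U. {x\<in>topspace X. f x = z})" by auto
    then show "openin X {x \<in> topspace X. f x \<in> U}" using H by auto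
  qed auto
qed

lemma cont_SymT:
  "continuous_map X SymT p \<longleftrightarrow> (p \<in> topspace X \<rightarrow> {p. bij p}) \<and> (\<forall>y. continuous_map X (discrete_topology UNIV) (\<lambda>x. p x y))"
  unfolding SymT_def continuous_map_in_subtopology continuous_map_componentwise_UNIV by auto

lemma ev_cont: "continuous_map SymT (discrete_topology UNIV) (\<lambda>p. p y)"
  unfolding SymT_def
  by (rule continuous_map_from_subtopology) (rule continuous_map_product_projection[of y UNIV "\<lambda>_. discrete_topology UNIV", simplified])

lemma group_SymF: "group SymF"
  apply (rule groupI)
  apply (auto simp: SymF_def bij_comp)
  apply (rule_tac x="inv_into UNIV x" in exI)
  apply (auto simp: bij_imp_bij_inv bij_is_inj inv_o_cancel)
  done

lemma inv_SymF: "bij p \<Longrightarrow> m_inv SymF p = inv_into UNIV p"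
  apply (rule group.inv_equality[OF group_SymF])
  apply (auto simp: SymF_def bij_imp_bij_inv bij_is_inj inv_o_cancel)
  done

lemma Hausdorff_SymT: "Hausdorff_space SymT"
  unfolding SymT_def
  by (rule Hausdorff_space_subtopology) (simp add: Hausdorff_space_product_topology)

lemma tg_SymT: "topological_group SymF SymT"
  unfolding topological_group_def
proof (intro conjI)
  show "group SymF" by (rule group_SymF)
  show "topspace SymT = carrier SymF" by (simp add: topspace_SymT SymF_def)
  show "continuous_map (prod_topology SymT SymT) SymT (\<lambda>p. fst p \<otimes>\<^bsub>SymF\<^esub> snd p)"
    unfolding cont_SymT
  proof (intro conjI allI)
    show "(\<lambda>p. fst p \<otimes>\<^bsub>SymF\<^esub> snd p) \<in> topspace (prod_topology SymT SymT) \<rightarrow> {p. bij p}"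
      by (auto simp: SymF_def topspace_SymT bij_comp)
    fix y
    show "continuous_map (prod_topology SymT SymT) (discrete_topology UNIV) (\<lambda>x. (fst x \<otimes>\<^bsub>SymF\<^esub> snd x) y)"
      unfolding cont_disc
    proof
      fix z
      let ?X = "prod_topology SymT SymT"
      have c1: "continuous_map ?X (discrete_topology UNIV) (\<lambda>x. snd x y)"
        by (rule continuous_map_compose[OF continuous_map_snd ev_cont, unfolded o_def])
      have c2: "continuous_map ?X (discrete_topology UNIV) (\<lambda>x. fst x w)" for w
        by (rule continuous_map_compose[OF continuous_map_fst ev_cont, unfolded o_def])
      have "{x \<in> topspace ?X. (fst x \<otimes>\<^bsub>SymF\<^esub> snd x) y = z} =
          (\<Union>w. {x \<in> topspace ?X. snd x y = w} \<inter> {x \<in> topspace ?X. fst x w = z})"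
        by (auto simp: SymF_def)
      moreover have "openin ?X (\<Union>w. {x \<in> topspace ?X. snd x y = w} \<inter> {x \<in> topspace ?X. fst x w = z})"
      proof -
        have o1: "openin ?X {x \<in> topspace ?X. snd x y = w}" for w
          using c1 unfolding cont_disc by blast
        have o2: "openin ?X {x \<in> topspace ?X. fst x w = z}" for w
          using c2[of w] unfolding cont_disc by blast
        show ?thesis by (rule openin_Union) (auto intro!: openin_Int o1 o2 simp del: topspace_prod_topology)
      qed
      ultimately show "openin ?X {x \<in> topspace ?X. (fst x \<otimes>\<^bsub>SymF\<^esub> snd x) y = z}" by simp
    qed
  qed
  have "continuous_map SymT SymT (\<lambda>x. inv_into UNIV x)"
    unfolding cont_SymT
  proof (intro conjI allI)
    show "inv_into UNIV \<in> topspace SymT \<rightarrow> {p. bij p}" by (auto simp: topspace_SymT bij_imp_bij_inv)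
    fix y
    show "continuous_map SymT (discrete_topology UNIV) (\<lambda>x. inv_into UNIV x y)"
      unfolding cont_disc
    proof
      fix z
      have "{x \<in> topspace SymT. inv_into UNIV x y = z} = {x \<in> topspace SymT. x z = y}"
        by (auto simp: topspace_SymT bij_inv_eq_iff bij_is_inj)
      then show "openin SymT {x \<in> topspace SymT. inv_into UNIV x y = z}"
        using ev_cont[of z] unfolding cont_disc by simp
    qed
  qed
  then show "continuous_map SymT SymT (\<lambda>x. m_inv SymF x)"
    by (rule continuous_map_eq) (simp add: topspace_SymT inv_SymF)
qed


lemma (in group) lcos_eq_iff:
  assumes "subgroup U G" "p \<in> carrier G" "q \<in> carrier G"
  shows "(p <# U = q <# U) \<longleftrightarrow> inv q \<otimes> p \<in> U"
proof
  assume e: "p <# U = q <# U"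
  have "p \<in> p <# U" using assms unfolding l_coset_def
    by (metis (no_types, lifting) UN_iff r_one singletonI subgroup.one_closed)
  then obtain u where "u \<in> U" "p = q \<otimes> u" using e unfolding l_coset_def by blast
  then show "inv q \<otimes> p \<in> U"
    using assms by (metis inv_solve_left subgroup.mem_carrier)
next
  assume "inv q \<otimes> p \<in> U"
  then have "p \<in> q <# U" using subgroup.lcos_module_rev[OF assms(1) is_group assms(3,2)] by blast
  then show "p <# U = q <# U" using l_repr_independence[OF _ assms(3,1)] by simp
qed

lemma tg_affine:
  assumes "topological_group G TG" "k1 \<in> carrier G" "k2 \<in> carrier G"
  shows "continuous_map TG TG (\<lambda>a. k1 \<otimes>\<^bsub>G\<^esub> a \<otimes>\<^bsub>G\<^esub> k2)"
proof -
  have ts: "topspace TG = carrier G" and cm: "continuous_map (prod_topology TG TG) TG (\<lambda>p. fst p \<otimes>\<^bsub>G\<^esub> snd p)"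
    using assms(1) unfolding topological_group_def by auto
  have c1: "continuous_map TG TG (\<lambda>a. k1 \<otimes>\<^bsub>G\<^esub> a)"
    using continuous_map_compose[OF continuous_map_pairedI[OF continuous_map_const[THEN iffD2] continuous_map_id] cm]
      assms ts by (auto simp: o_def)
  show ?thesis
    using continuous_map_compose[OF continuous_map_pairedI[OF c1 continuous_map_const[THEN iffD2]] cm]
      assms ts by (auto simp: o_def)
qed

theorem theorem6p7:
  fixes G :: "'a monoid" and TG :: "'a topology"
    and M :: "'m monoid" and TM :: "'m topology"
    and f :: "'m \<Rightarrow> 'a"
  assumes "topological_group G TG" and "Hausdorff_space TG" and "non_archimedean G TG"
    and "topological_group M TM" and "Hausdorff_space TM"
    and "f \<in> hom M G" and "continuous_map TM TG f"
    and "epi_hausdorff_tg M TM G TG f"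
  shows "TG closure_of (f ` carrier M) = topspace TG"
proof (rule ccontr)
  assume nd: "TG closure_of (f ` carrier M) \<noteq> topspace TG"
  have grpG: "group G" and ts: "topspace TG = carrier G"
    using assms(1) unfolding topological_group_def by auto
  have grpM: "group M" using assms(4) unfolding topological_group_def by auto
  interpret Gr: group G by (rule grpG)
  interpret fh: group_hom M G f unfolding group_hom_def group_hom_axioms_def using grpM grpG assms(6) by blast
  have "\<not> topspace TG \<subseteq> TG closure_of (f ` carrier M)"
    using nd closure_of_subset_topspace[of TG "f ` carrier M"] by (metis subset_antisym)
  then obtain x where x: "x \<in> topspace TG" "x \<notin> TG closure_of (f ` carrier M)"
    by (metis subsetI)
  from x have "\<not> (\<forall>T. x \<in> T \<and> openin TG T \<longrightarrow> (\<exists>y. y \<in> f ` carrier M \<and> y \<in> T))"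
    by (simp only: in_closure_of) simp
  then obtain W where W: "x \<in> W" "openin TG W" "\<And>y. y \<in> f ` carrier M \<Longrightarrow> y \<notin> W"
    by metis
  have xc: "x \<in> carrier G" using x ts by simp
  define V where "V = {a \<in> topspace TG. x \<otimes>\<^bsub>G\<^esub> a \<otimes>\<^bsub>G\<^esub> \<one>\<^bsub>G\<^esub> \<in> W}"
  have "openin TG V" unfolding V_def
    by (rule openin_continuous_map_preimage[OF tg_affine[OF assms(1) xc Gr.one_closed] W(2)])
  moreover have "\<one>\<^bsub>G\<^esub> \<in> V" using W xc ts by (simp add: V_def)
  ultimately obtain U where U: "subgroup U G" "openin TG U" "U \<subseteq> V"
    using assms(3) unfolding non_archimedean_def by blast
  have Uc: "U \<subseteq> carrier G" using U(1) subgroup.subset by blast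
  define \<Omega> where "\<Omega> = {c <#\<^bsub>G\<^esub> U | c. c \<in> carrier G}"
  define Orb where "Orb = {f m <#\<^bsub>G\<^esub> U | m. m \<in> carrier M}"
  define act where "act a C = (if C \<in> \<Omega> then a <#\<^bsub>G\<^esub> C else C)" for a C
  define g where "g a = (\<lambda>(C::'a set, b::bool). (act a C, b))" for a
  define \<sigma> where "\<sigma> = (\<lambda>(C::'a set, b::bool). if C \<in> Orb then (C, \<not> b) else (C, b))"
  define h where "h a = \<sigma> \<circ> g a \<circ> \<sigma>" for a
  have Orb\<Omega>: "Orb \<subseteq> \<Omega>" unfolding Orb_def \<Omega>_def by auto
  have act_mult: "act (a \<otimes>\<^bsub>G\<^esub> b) C = act a (act b C)" if "a \<in> carrier G" "b \<in> carrier G" for a b C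
  proof (cases "C \<in> \<Omega>")
    case True
    then obtain c where c: "c \<in> carrier G" "C = c <#\<^bsub>G\<^esub> U" unfolding \<Omega>_def by blast
    have "b <#\<^bsub>G\<^esub> C \<in> \<Omega>" using c that Uc by (auto simp: \<Omega>_def Gr.lcos_m_assoc)
    then show ?thesis using True c that Uc by (simp add: act_def Gr.lcos_m_assoc Gr.m_assoc)
  qed (simp add: act_def)
  have act_one: "act \<one>\<^bsub>G\<^esub> C = C" for C
  proof (cases "C \<in> \<Omega>")
    case True
    then obtain c where c: "c \<in> carrier G" "C = c <#\<^bsub>G\<^esub> U" unfolding \<Omega>_def by blast
    then show ?thesis using True Uc by (simp add: act_def Gr.lcos_m_assoc)
  qed (simp add: act_def)
  have g_mult: "g (a \<otimes>\<^bsub>G\<^esub> b) = g a \<circ> g b" if "a \<in> carrier G" "b \<in> carrier G" for a b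
    using act_mult[OF that] by (auto simp: g_def fun_eq_iff)
  have g_one: "g \<one>\<^bsub>G\<^esub> = id" by (auto simp: g_def fun_eq_iff act_one)
  have g_bij: "bij (g a)" if "a \<in> carrier G" for a
  proof (rule o_bij[of "g (inv\<^bsub>G\<^esub> a)"])
    show "g (inv\<^bsub>G\<^esub> a) \<circ> g a = id" using g_mult[of "inv\<^bsub>G\<^esub> a" a] that g_one by simp
    show "g a \<circ> g (inv\<^bsub>G\<^esub> a) = id" using g_mult[of a "inv\<^bsub>G\<^esub> a"] that g_one by simp
  qed
  have \<sigma>\<sigma>: "\<sigma> \<circ> \<sigma> = id" by (auto simp: \<sigma>_def fun_eq_iff)
  have \<sigma>_bij: "bij \<sigma>" by (rule o_bij[OF \<sigma>\<sigma> \<sigma>\<sigma>])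
  have h_bij: "bij (h a)" if "a \<in> carrier G" for a
    unfolding h_def using g_bij[OF that] \<sigma>_bij by (simp add: bij_comp)
  have h_mult: "h (a \<otimes>\<^bsub>G\<^esub> b) = h a \<circ> h b" if "a \<in> carrier G" "b \<in> carrier G" for a b
  proof -
    have "h a \<circ> h b = \<sigma> \<circ> g a \<circ> (\<sigma> \<circ> \<sigma>) \<circ> g b \<circ> \<sigma>" by (simp add: h_def o_assoc)
    then show ?thesis by (simp add: \<sigma>\<sigma> h_def g_mult[OF that] o_assoc)
  qed
  have g_hom: "g \<in> hom G SymF"
    by (rule homI) (auto simp: SymF_def g_bij g_mult)
  have h_hom: "h \<in> hom G SymF"
    by (rule homI) (auto simp: SymF_def h_bij h_mult)
  have gc: "continuous_map TG (discrete_topology UNIV) (\<lambda>a. g a y)" for y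
    unfolding cont_disc
  proof
    fix z
    obtain C b where y: "y = (C, b)" by (cases y)
    show "openin TG {a \<in> topspace TG. g a y = z}"
    proof (cases "C \<in> \<Omega>")
      case False
      then have "{a \<in> topspace TG. g a y = z} = (if (C, b) = z then topspace TG else {})"
        by (auto simp: g_def act_def y)
      then show ?thesis by simp
    next
      case True
      then obtain c where c: "c \<in> carrier G" "C = c <#\<^bsub>G\<^esub> U" unfolding \<Omega>_def by blast
      have ga: "g a y = ((a \<otimes>\<^bsub>G\<^esub> c) <#\<^bsub>G\<^esub> U, b)" if "a \<in> carrier G" for a
        using True c that Uc by (simp add: g_def act_def y Gr.lcos_m_assoc)
      show ?thesis
      proof (cases "{a \<in> topspace TG. g a y = z} = {}")
        case False
        then obtain a0 where a0: "a0 \<in> carrier G" "g a0 y = z" using ts by auto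
        have "{a \<in> topspace TG. g a y = z} =
              {a \<in> topspace TG. inv\<^bsub>G\<^esub> (a0 \<otimes>\<^bsub>G\<^esub> c) \<otimes>\<^bsub>G\<^esub> a \<otimes>\<^bsub>G\<^esub> c \<in> U}"
        proof -
          have "g a y = z \<longleftrightarrow> inv\<^bsub>G\<^esub> (a0 \<otimes>\<^bsub>G\<^esub> c) \<otimes>\<^bsub>G\<^esub> a \<otimes>\<^bsub>G\<^esub> c \<in> U"
            if "a \<in> carrier G" for a
            using ga[OF that] ga[OF a0(1)] a0 Gr.lcos_eq_iff[OF U(1), of "a \<otimes>\<^bsub>G\<^esub> c" "a0 \<otimes>\<^bsub>G\<^esub> c"]
              that c by (auto simp: Gr.m_assoc)
          then show ?thesis using ts by auto
        qed
        moreover have "openin TG {a \<in> topspace TG. inv\<^bsub>G\<^esub> (a0 \<otimes>\<^bsub>G\<^esub> c) \<otimes>\<^bsub>G\<^esub> a \<otimes>\<^bsub>G\<^esub> c \<in> U}"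
          by (rule openin_continuous_map_preimage[OF tg_affine[OF assms(1)] U(2)]) (use a0 c in auto)
        ultimately show ?thesis by simp
      next
        case True
        then show ?thesis by (metis openin_empty)
      qed
    qed
  qed
  have g_cont: "continuous_map TG SymT g"
    unfolding cont_SymT using gc g_bij ts by auto
  have h_cont: "continuous_map TG SymT h"
    unfolding cont_SymT
  proof (intro conjI allI)
    show "h \<in> topspace TG \<rightarrow> {p. bij p}" using h_bij ts by auto
    fix y
    have "continuous_map TG (discrete_topology UNIV) (\<sigma> \<circ> (\<lambda>a. g a (\<sigma> y)))"
      by (rule continuous_map_compose[OF gc]) simp
    then show "continuous_map TG (discrete_topology UNIV) (\<lambda>a. h a y)"
      by (simp add: h_def o_def)
  qed
  have comm: "g (f m) \<circ> \<sigma> = \<sigma> \<circ> g (f m)" if m: "m \<in> carrier M" for m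
  proof
    fix y :: "'a set \<times> bool"
    obtain C b where y: "y = (C, b)" by (cases y)
    have fm: "f m \<in> carrier G" using m by simp
    show "(g (f m) \<circ> \<sigma>) y = (\<sigma> \<circ> g (f m)) y"
    proof (cases "C \<in> \<Omega>")
      case False
      then show ?thesis using Orb\<Omega> by (auto simp: g_def \<sigma>_def act_def y)
    next
      case True
      then obtain c where c: "c \<in> carrier G" "C = c <#\<^bsub>G\<^esub> U" unfolding \<Omega>_def by blast
      have eq: "f m <#\<^bsub>G\<^esub> C = (f m \<otimes>\<^bsub>G\<^esub> c) <#\<^bsub>G\<^esub> U" using c fm Uc by (simp add: Gr.lcos_m_assoc)
      have "f m <#\<^bsub>G\<^esub> C \<in> Orb \<longleftrightarrow> C \<in> Orb"
      proof
        assume "C \<in> Orb"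
        then obtain m' where m': "m' \<in> carrier M" "C = f m' <#\<^bsub>G\<^esub> U" unfolding Orb_def by blast
        then have "f m <#\<^bsub>G\<^esub> C = f (m \<otimes>\<^bsub>M\<^esub> m') <#\<^bsub>G\<^esub> U"
          using m fm Uc by (simp add: Gr.lcos_m_assoc)
        then show "f m <#\<^bsub>G\<^esub> C \<in> Orb" unfolding Orb_def using m m'
          by (intro CollectI exI[of _ "m \<otimes>\<^bsub>M\<^esub> m'"]) auto
      next
        assume "f m <#\<^bsub>G\<^esub> C \<in> Orb"
        then obtain m' where m': "m' \<in> carrier M" "f m <#\<^bsub>G\<^esub> C = f m' <#\<^bsub>G\<^esub> U" unfolding Orb_def by blast
        have Csub: "C \<subseteq> carrier G" using c Uc Gr.l_coset_subset_G by simp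
        have "inv\<^bsub>G\<^esub> (f m) <#\<^bsub>G\<^esub> (f m <#\<^bsub>G\<^esub> C) = (inv\<^bsub>G\<^esub> (f m) \<otimes>\<^bsub>G\<^esub> f m) <#\<^bsub>G\<^esub> C"
          using Csub fm by (simp add: Gr.lcos_m_assoc)
        then have "C = inv\<^bsub>G\<^esub> (f m) <#\<^bsub>G\<^esub> (f m <#\<^bsub>G\<^esub> C)"
          using Csub fm by (simp add: Gr.lcos_mult_one)
        also have "\<dots> = f (inv\<^bsub>M\<^esub> m \<otimes>\<^bsub>M\<^esub> m') <#\<^bsub>G\<^esub> U"
          using m' m fm Uc by (simp add: Gr.lcos_m_assoc)
        finally show "C \<in> Orb" unfolding Orb_def using m m'
          by (intro CollectI exI[of _ "inv\<^bsub>M\<^esub> m \<otimes>\<^bsub>M\<^esub> m'"]) auto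
      qed
      moreover have "f m <#\<^bsub>G\<^esub> C \<in> \<Omega>" using eq fm c unfolding \<Omega>_def by blast
      ultimately show ?thesis using True Orb\<Omega> by (auto simp: g_def \<sigma>_def act_def y)
    qed
  qed
  have agree: "\<forall>m \<in> carrier M. g (f m) = h (f m)"
  proof
    fix m assume m: "m \<in> carrier M"
    have "h (f m) = \<sigma> \<circ> (\<sigma> \<circ> g (f m))" using comm[OF m] by (simp add: h_def comp_assoc)
    also have "\<dots> = g (f m)" by (simp add: comp_assoc[symmetric] \<sigma>\<sigma>)
    finally show "g (f m) = h (f m)" by simp
  qed
  have "\<forall>a \<in> carrier G. g a = h a"
    using assms(8) unfolding epi_hausdorff_tg_def
    using tg_SymT Hausdorff_SymT g_hom g_cont h_hom h_cont agree by blast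
  then have e: "g x (U, True) = h x (U, True)" using xc by simp
  have U\<Omega>: "U \<in> \<Omega>" unfolding \<Omega>_def using Gr.lcos_mult_one[OF Uc] by force
  have UO: "U \<in> Orb" unfolding Orb_def using Gr.lcos_mult_one[OF Uc] fh.hom_one fh.G.one_closed by force
  have xUO: "x <#\<^bsub>G\<^esub> U \<notin> Orb"
  proof
    assume "x <#\<^bsub>G\<^esub> U \<in> Orb"
    then obtain m where m: "m \<in> carrier M" "x <#\<^bsub>G\<^esub> U = f m <#\<^bsub>G\<^esub> U" unfolding Orb_def by blast
    have "f m \<in> f m <#\<^bsub>G\<^esub> U" unfolding l_coset_def using m U(1) subgroup.one_closed by fastforce
    then obtain u where u: "u \<in> U" "f m = x \<otimes>\<^bsub>G\<^esub> u" using m unfolding l_coset_def by auto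
    then have "x \<otimes>\<^bsub>G\<^esub> u \<in> W" using U(3) Uc xc by (auto simp: V_def subset_iff)
    then show False using W(3) m u by (metis image_eqI)
  qed
  show False using e U\<Omega> UO xUO by (simp add: g_def h_def \<sigma>_def act_def)
qed

end
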